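(* Let $\alpha,\beta,\gamma$ be partitions with $\alpha_1\le 2$ and let $\Gamma$ be an LR-tableau of type $(\alpha,\beta,\gamma)$; let $x$ be the number of entries $1$ in $\Gamma$. Assume: (1) the number of entries $2$ in $\Gamma$ equals $x$ or $x-1$; (2) every row of $\Gamma$ contains at most one (non-empty) box; (3) if row $j$ contains an entry $2$ and row $i$ contains an entry $1$, then $j>i$. Then the poset $(\mathcal D_\Gamma,\le_{\rm arc})$ is isomorphic to the symmetric group $S_x$ with the Bruhat order.
   Context: For a partition $\lambda$, $\lambda'$ is its conjugate; the diagram of $\lambda$ is drawn with $\lambda'_i$ boxes in row $i$, so the $i$-th row of $\beta\setminus\gamma$ consists of the boxes in columns $\gamma'_i+1,\dots,\beta'_i$. With $\alpha_1\le2$, $\alpha'=(\alpha'_1,\alpha'_2)$. An LR-tableau of type $(\alpha,\beta,\gamma)$ is a filling of $\beta\setminus\gamma$ with $\alpha'_1$ entries $1$ and $\alpha'_2$ entries $2$, weakly increasing along rows, strictly increasing down columns, such that for each $c\ge0$ the number of entries $1$ in columns to the right of column $c$ is at least the number of entries $2$ there. Place the positive integers on a line in decreasing order from left to right. An arc is a pair $(m,n)$, $m>n$ positive integers (source $m$, target $n$); a pole at $n$ is regarded as an arc $(\infty,n)$. An arc diagram of type $(\alpha,\beta,\gamma)$ is a finite multiset of $\alpha'_2$ arcs and $\alpha'_1-\alpha'_2$ poles with, for each $i$, exactly $\beta'_i-\gamma'_i$ members having source or target $i$. It has LR type $\Gamma$ if for each $i$ the number of arcs with source $i$ equals the number of entries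 $2$ in row $i$ of $\Gamma$; $\mathcal D_\Gamma$ is the set of such diagrams. Moves: for $a>b>c>d$, (A) replaces arcs $(a,c),(b,d)$ by $(a,d),(b,c)$; (C) replaces them by $(a,b),(c,d)$; for $a>b>c$, (B) replaces arc $(a,c)$ and pole $(\infty,b)$ by arc $(a,b)$ and pole $(\infty,c)$; (D) replaces them by arc $(b,c)$ and pole $(\infty,a)$; other members unchanged. $\Delta\le_{\rm arc}\Delta'$ iff $\Delta$ is obtained from $\Delta'$ by a finite (possibly empty) sequence of moves; $\mathcal D_\Gamma$ carries the restricted order. *)

theory Defs
  imports "HOL-Library.Multiset" "HOL-Library.Extended_Nat"
          "HOL-Combinatorics.Permutations" "HOL-Combinatorics.Transposition"
begin

definition is_partition :: "nat list \<Rightarrow> bool" where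
  "is_partition l \<longleftrightarrow> sorted_wrt (\<ge>) l \<and> (\<forall>p\<in>set l. 0 < p)"

text \<open>The i-th part (1-indexed), zero beyond the length.\<close>
definition part :: "nat list \<Rightarrow> nat \<Rightarrow> nat" where
  "part l i = (if 1 \<le> i \<and> i \<le> length l then l ! (i - 1) else 0)"

definition part_conj :: "nat list \<Rightarrow> nat list" where
  "part_conj l = map (\<lambda>j. length (filter (\<lambda>p. j \<le> p) l)) [1..<Suc (part l 1)]"

text \<open>Boxes of the skew diagram beta minus gamma: row i (i \<ge> 1) consists of the
  columns gamma'_i+1, ..., beta'_i.\<close>
definition in_skew :: "nat list \<Rightarrow> nat list \<Rightarrow> nat \<Rightarrow> nat \<Rightarrow> bool" where
  "in_skew \<beta> \<gamma> i c \<longleftrightarrow> 1 \<le> i \<and> part (part_conj \<gamma>) i < c \<and> c \<le> part (part_conj \<beta>) i"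

definition entry_count :: "nat list \<Rightarrow> nat list \<Rightarrow> (nat \<Rightarrow> nat \<Rightarrow> nat) \<Rightarrow> nat \<Rightarrow> nat" where
  "entry_count \<beta> \<gamma> T k = card {(i, c). in_skew \<beta> \<gamma> i c \<and> T i c = k}"

definition row_count :: "nat list \<Rightarrow> nat list \<Rightarrow> (nat \<Rightarrow> nat \<Rightarrow> nat) \<Rightarrow> nat \<Rightarrow> nat \<Rightarrow> nat" where
  "row_count \<beta> \<gamma> T k i = card {c. in_skew \<beta> \<gamma> i c \<and> T i c = k}"

text \<open>LR-tableau of type (alpha, beta, gamma); the filling T assigns to box (row i, column c)
  the entry T i c (values outside the skew diagram are irrelevant).\<close>
definition LR_tableau :: "nat list \<Rightarrow> nat list \<Rightarrow> nat list \<Rightarrow> (nat \<Rightarrow> nat \<Rightarrow> nat) \<Rightarrow> bool" where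
  "LR_tableau \<alpha> \<beta> \<gamma> T \<longleftrightarrow>
     (\<forall>i. part \<gamma> i \<le> part \<beta> i) \<and>
     (\<forall>i c. in_skew \<beta> \<gamma> i c \<longrightarrow> T i c \<in> {1, 2}) \<and>
     entry_count \<beta> \<gamma> T 1 = part (part_conj \<alpha>) 1 \<and>
     entry_count \<beta> \<gamma> T 2 = part (part_conj \<alpha>) 2 \<and>
     (\<forall>i c c'. in_skew \<beta> \<gamma> i c \<and> in_skew \<beta> \<gamma> i c' \<and> c \<le> c' \<longrightarrow> T i c \<le> T i c') \<and>
     (\<forall>i i' c. in_skew \<beta> \<gamma> i c \<and> in_skew \<beta> \<gamma> i' c \<and> i < i' \<longrightarrow> T i c < T i' c) \<and>
     (\<forall>c0. card {(i, c). in_skew \<beta> \<gamma> i c \<and> c0 < c \<and> T i c = 2}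
             \<le> card {(i, c). in_skew \<beta> \<gamma> i c \<and> c0 < c \<and> T i c = 1})"

text \<open>A member (s, t): an arc (m, n) is (enat m, n) with m > n \<ge> 1; a pole at n is (\<infinity>, n).\<close>
definition arc_diagram :: "nat list \<Rightarrow> nat list \<Rightarrow> nat list \<Rightarrow> (enat \<times> nat) multiset \<Rightarrow> bool" where
  "arc_diagram \<alpha> \<beta> \<gamma> D \<longleftrightarrow>
     (\<forall>(s, t)\<in>#D. 1 \<le> t \<and> enat t < s) \<and>
     size (filter_mset (\<lambda>(s, t). s \<noteq> \<infinity>) D) = part (part_conj \<alpha>) 2 \<and>
     size (filter_mset (\<lambda>(s, t). s = \<infinity>) D) = part (part_conj \<alpha>) 1 - part (part_conj \<alpha>) 2 \<and>
     (\<forall>i\<ge>1. size (filter_mset (\<lambda>(s, t). s = enat i \<or> t = i) D)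
              = part (part_conj \<beta>) i - part (part_conj \<gamma>) i)"

definition has_LR_type :: "nat list \<Rightarrow> nat list \<Rightarrow> (nat \<Rightarrow> nat \<Rightarrow> nat) \<Rightarrow> (enat \<times> nat) multiset \<Rightarrow> bool" where
  "has_LR_type \<beta> \<gamma> T D \<longleftrightarrow>
     (\<forall>i\<ge>1. size (filter_mset (\<lambda>(s, t). s = enat i) D) = row_count \<beta> \<gamma> T 2 i)"

definition D_Gamma :: "nat list \<Rightarrow> nat list \<Rightarrow> nat list \<Rightarrow> (nat \<Rightarrow> nat \<Rightarrow> nat) \<Rightarrow> (enat \<times> nat) multiset set" where
  "D_Gamma \<alpha> \<beta> \<gamma> T = {D. arc_diagram \<alpha> \<beta> \<gamma> D \<and> has_LR_type \<beta> \<gamma> T D}"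

text \<open>arc_move D D': D' is obtained from D by one of the moves (A),(B),(C),(D).\<close>
definition arc_move :: "(enat \<times> nat) multiset \<Rightarrow> (enat \<times> nat) multiset \<Rightarrow> bool" where
  "arc_move D D' \<longleftrightarrow>
    (\<exists>M a b c d. a > b \<and> b > c \<and> c > d \<and> d \<ge> 1 \<and>
        D = M + {#(enat a, c), (enat b, d)#} \<and>
        (D' = M + {#(enat a, d), (enat b, c)#} \<or> D' = M + {#(enat a, b), (enat c, d)#})) \<or>
    (\<exists>M a b c. a > b \<and> b > c \<and> c \<ge> 1 \<and>
        D = M + {#(enat a, c), (\<infinity>, b)#} \<and>
        (D' = M + {#(enat a, b), (\<infinity>, c)#} \<or> D' = M + {#(enat b, c), (\<infinity>, a)#}))"

definition arc_le :: "(enat \<times> nat) multiset \<Rightarrow> (enat \<times> nat) multiset \<Rightarrow> bool" where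
  "arc_le \<Delta> \<Delta>' \<longleftrightarrow> arc_move\<^sup>*\<^sup>* \<Delta>' \<Delta>"

definition inversions :: "nat \<Rightarrow> (nat \<Rightarrow> nat) \<Rightarrow> nat" where
  "inversions x w = card {(i, j). 1 \<le> i \<and> i < j \<and> j \<le> x \<and> w j < w i}"

definition bruhat_step :: "nat \<Rightarrow> (nat \<Rightarrow> nat) \<Rightarrow> (nat \<Rightarrow> nat) \<Rightarrow> bool" where
  "bruhat_step x u v \<longleftrightarrow>
     (\<exists>i j. 1 \<le> i \<and> i < j \<and> j \<le> x \<and> v = u \<circ> Transposition.transpose i j
            \<and> inversions x u < inversions x v)"

definition bruhat_le :: "nat \<Rightarrow> (nat \<Rightarrow> nat) \<Rightarrow> (nat \<Rightarrow> nat) \<Rightarrow> bool" where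
  "bruhat_le x u v \<longleftrightarrow> (bruhat_step x)\<^sup>*\<^sup>* u v"

end

theory Submission
  imports Defs
begin

lemma inv_incr:
  assumes "1 \<le> p" "p < q" "q \<le> x" "u p < u q"
  shows "inversions x u < inversions x (u \<circ> Transposition.transpose p q)"
proof -
  define v where "v = u \<circ> Transposition.transpose p q"
  define \<sigma> where "\<sigma> = Transposition.transpose p q"
  define I where "I = (\<lambda>w::nat\<Rightarrow>nat. {(i, j). 1 \<le> i \<and> i < j \<and> j \<le> x \<and> w j < w i})"
  define \<phi> where "\<phi> = (\<lambda>(i::nat,j::nat). if (p<i \<and> i<q) \<or> (p<j \<and> j<q) then (i,j) else (\<sigma> i, \<sigma> j))"
  have finv: "finite (I v)" 
    by (rule finite_subset[of _ "{1..x}\<times>{1..x}"]) (auto simp: I_def)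
  have sub: "\<phi> ` I u \<subseteq> I v - {(p,q)}"
  proof
    fix y assume "y \<in> \<phi> ` I u"
    then obtain i j where ij: "(i,j) \<in> I u" and y: "y = \<phi> (i,j)" by auto
    show "y \<in> I v - {(p,q)}"
      using ij assms unfolding y \<phi>_def I_def v_def \<sigma>_def
      by (auto simp: Transposition.transpose_def split: if_splits)
  qed
  have inj: "inj_on \<phi> (I u)"
    unfolding inj_on_def \<phi>_def I_def \<sigma>_def
    using assms by (auto simp: Transposition.transpose_def split: if_splits)
  have pq: "(p,q) \<in> I v" using assms by (auto simp: I_def v_def Transposition.transpose_def)
  have "card (I u) = card (\<phi> ` I u)" using inj by (simp add: card_image)
  also have "\<dots> \<le> card (I v - {(p,q)})" using sub finv by (intro card_mono) auto
  also have "\<dots> < card (I v)" using pq finv using card_Diff1_less[OF finv pq] by simp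
  finally show ?thesis unfolding inversions_def I_def v_def by simp
qed



lemma transpose_invol: "(u \<circ> Transposition.transpose p q) \<circ> Transposition.transpose p q = u"
  by (auto simp: fun_eq_iff Transposition.transpose_def)

lemma bruhat_step_iff:
  assumes u: "u permutes {1..x}"
  shows "bruhat_step x u v \<longleftrightarrow>
    (\<exists>p q. 1 \<le> p \<and> p < q \<and> q \<le> x \<and> v = u \<circ> Transposition.transpose p q \<and> u p < u q)"
proof
  assume "bruhat_step x u v"
  then obtain p q where pq: "1 \<le> p" "p < q" "q \<le> x" and v: "v = u \<circ> Transposition.transpose p q"
    and inv: "inversions x u < inversions x v" unfolding bruhat_step_def by blast
  have "u p \<noteq> u q" using permutes_inj[OF u] pq by (auto dest: injD)
  moreover have "\<not> u q < u p"
  proof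
    assume "u q < u p"
    hence "v p < v q" using pq by (simp add: v Transposition.transpose_def)
    from inv_incr[OF pq this] have "inversions x v < inversions x (v \<circ> Transposition.transpose p q)" .
    moreover have "v \<circ> Transposition.transpose p q = u" unfolding v by (rule transpose_invol)
    ultimately show False using inv by simp
  qed
  ultimately show "\<exists>p q. 1 \<le> p \<and> p < q \<and> q \<le> x \<and> v = u \<circ> Transposition.transpose p q \<and> u p < u q"
    using pq v by (intro exI[of _ p] exI[of _ q]) auto
next
  assume "\<exists>p q. 1 \<le> p \<and> p < q \<and> q \<le> x \<and> v = u \<circ> Transposition.transpose p q \<and> u p < u q"
  then obtain p q where "1 \<le> p" "p < q" "q \<le> x" "v = u \<circ> Transposition.transpose p q" "u p < u q"
    by blast
  thus "bruhat_step x u v" unfolding bruhat_step_def using inv_incr by blast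
qed

lemma bruhat_step_perm: "bruhat_step x u v \<Longrightarrow> u permutes {1..x} \<Longrightarrow> v permutes {1..x}"
  unfolding bruhat_step_def
  by (auto intro!: permutes_compose permutes_swap_id)

lemma bruhat_le_perm: "bruhat_le x u w \<Longrightarrow> u permutes {1..x} \<Longrightarrow> w permutes {1..x}"
  unfolding bruhat_le_def
proof (induction rule: rtranclp_induct)
  case (step y z)
  then show ?case using bruhat_step_perm[of x y z] by blast
qed auto

definition fs :: "enat \<Rightarrow> nat" where "fs s = (case s of enat n \<Rightarrow> n | \<infinity> \<Rightarrow> 0)"

definition Phi :: "(enat \<times> nat) multiset \<Rightarrow> nat" where
  "Phi D = sum_mset (image_mset (\<lambda>p. fs (fst p)) D)"

lemma Phi_add[simp]: "Phi (M + N) = Phi M + Phi N" "Phi (add_mset p M) = fs (fst p) + Phi M"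
  "Phi {#} = 0"
  by (auto simp: Phi_def)

lemma fs_simps[simp]: "fs (enat n) = n" "fs \<infinity> = 0" by (auto simp: fs_def)

lemma move_Phi: "arc_move D D' \<Longrightarrow> Phi D' \<le> Phi D"
  unfolding arc_move_def by auto

lemma moves_Phi: "arc_move\<^sup>*\<^sup>* D D' \<Longrightarrow> Phi D' \<le> Phi D"
  by (induction rule: rtranclp_induct) (auto dest: move_Phi)

locale arcsetup =
  fixes x :: nat and es :: "nat \<Rightarrow> enat" and et :: "nat \<Rightarrow> nat"
  assumes es_mono: "\<lbrakk>1\<le>p; p<q; q\<le>x\<rbrakk> \<Longrightarrow> es q < es p"
  and et_mono: "\<lbrakk>1\<le>p; p<q; q\<le>x\<rbrakk> \<Longrightarrow> et p < et q"
  and es_et: "\<lbrakk>1\<le>p; p\<le>x; 1\<le>q; q\<le>x\<rbrakk> \<Longrightarrow> enat (et q) < es p"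
  and et_pos: "\<lbrakk>1\<le>p; p\<le>x\<rbrakk> \<Longrightarrow> 1 \<le> et p"
begin

definition Gr :: "(nat \<Rightarrow> nat) \<Rightarrow> (enat \<times> nat) multiset" where
  "Gr w = image_mset (\<lambda>k. (es k, et (w k))) (mset_set {1..x})"

lemma es_less_iff: "p \<in> {1..x} \<Longrightarrow> q \<in> {1..x} \<Longrightarrow> es q < es p \<longleftrightarrow> p < q"
  using es_mono[of p q] es_mono[of q p] by (cases p q rule: linorder_cases) auto

lemma et_less_iff: "p \<in> {1..x} \<Longrightarrow> q \<in> {1..x} \<Longrightarrow> et p < et q \<longleftrightarrow> p < q"
  using et_mono[of p q] et_mono[of q p] by (cases p q rule: linorder_cases) auto

lemma Gr_split:
  assumes "p \<in> {1..x}" "q \<in> {1..x}" "p \<noteq> q"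
  shows "Gr w = image_mset (\<lambda>k. (es k, et (w k))) (mset_set ({1..x}-{p,q}))
                + {#(es p, et (w p)), (es q, et (w q))#}"
proof -
  have "mset_set {1..x} = add_mset p (mset_set ({1..x}-{p}))"
    using assms by (intro mset_set.remove) auto
  also have "mset_set ({1..x}-{p}) = add_mset q (mset_set ({1..x}-{p}-{q}))"
    using assms by (intro mset_set.remove) auto
  also have "{1..x}-{p}-{q} = {1..x}-{p,q}" by auto
  finally show ?thesis unfolding Gr_def by (simp add: add_mset_commute)
qed

lemma Gr_swap:
  assumes "p \<in> {1..x}" "q \<in> {1..x}" "p \<noteq> q"
  shows "Gr (w \<circ> Transposition.transpose p q) = image_mset (\<lambda>k. (es k, et (w k))) (mset_set ({1..x}-{p,q}))
                + {#(es p, et (w q)), (es q, et (w p))#}"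
proof -
  have "image_mset (\<lambda>k. (es k, et ((w \<circ> Transposition.transpose p q) k))) (mset_set ({1..x}-{p,q}))
     = image_mset (\<lambda>k. (es k, et (w k))) (mset_set ({1..x}-{p,q}))"
    by (intro image_mset_cong) (auto simp: Transposition.transpose_def)
  with Gr_split[OF assms, of "w \<circ> Transposition.transpose p q"] assms show ?thesis
    by (simp add: Transposition.transpose_def)
qed

lemma in_Gr: "P \<in># Gr w \<Longrightarrow> \<exists>k\<in>{1..x}. P = (es k, et (w k))"
  unfolding Gr_def by auto

lemma Phi_Gr: "Phi (Gr w) = Phi (Gr u)"
  unfolding Gr_def Phi_def by (simp add: image_mset.compositionality o_def)

lemma K2:
  assumes w: "w permutes {1..x}" and pq: "1 \<le> p" "p < q" "q \<le> x" "w q < w p"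
  shows "arc_move (Gr w) (Gr (w \<circ> Transposition.transpose p q))"
proof -
  have P: "p \<in> {1..x}" "q \<in> {1..x}" "p \<noteq> q" using pq by auto
  have wp: "w p \<in> {1..x}" "w q \<in> {1..x}" using P permutes_in_image[OF w] by auto
  have "es q < es p" using es_mono pq by auto
  then obtain b where b: "es q = enat b" by (cases "es q") auto
  have c: "et (w q) < et (w p)" using et_less_iff[OF wp(2) wp(1)] pq by simp
  have bc: "et (w p) < b" using es_et[of q "w p"] wp P b by auto
  have d: "1 \<le> et (w q)" using et_pos wp by auto
  define M where "M = image_mset (\<lambda>k. (es k, et (w k))) (mset_set ({1..x}-{p,q}))"
  show ?thesis
  proof (cases "es p")
    case (enat a)
    have ab: "b < a" using \<open>es q < es p\<close> b enat by simp
    show ?thesis unfolding arc_move_def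
      apply (rule disjI1)
      apply (rule exI[of _ M], rule exI[of _ a], rule exI[of _ b], rule exI[of _ "et (w p)"],
             rule exI[of _ "et (w q)"])
      using ab bc c d Gr_split[OF P, of w] Gr_swap[OF P, of w] enat b unfolding M_def by simp
  next
    case infinity
    show ?thesis unfolding arc_move_def
      apply (rule disjI2)
      apply (rule exI[of _ M], rule exI[of _ b], rule exI[of _ "et (w p)"], rule exI[of _ "et (w q)"])
      using bc c d Gr_split[OF P, of w] Gr_swap[OF P, of w] infinity b unfolding M_def
      by (simp add: add_mset_commute)
  qed
qed

lemma K1:
  assumes w: "w permutes {1..x}" and mv: "arc_move (Gr w) D'" and ph: "Phi D' = Phi (Gr w)"
  shows "\<exists>p q. 1 \<le> p \<and> p < q \<and> q \<le> x \<and> w q < w p \<and> D' = Gr (w \<circ> Transposition.transpose p q)"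
proof -
  have A: ?thesis if abcd: "b < a" "c < b" "d < c" "1 \<le> d"
    and D: "Gr w = M + {#(enat a, c), (enat b, d)#}"
    and D': "D' = M + {#(enat a, d), (enat b, c)#} \<or> D' = M + {#(enat a, b), (enat c, d)#}" for M a b c d
  proof -
  have "(enat a, c) \<in># Gr w" "(enat b, d) \<in># Gr w" unfolding D by auto
  then obtain p q where P: "p \<in> {1..x}" "q \<in> {1..x}" and ep: "es p = enat a" "et (w p) = c"
    and eq: "es q = enat b" "et (w q) = d" by (auto dest!: in_Gr)
  have pq: "p < q" using es_less_iff[OF P] ep eq abcd by simp
  have wp: "w p \<in> {1..x}" "w q \<in> {1..x}" using P permutes_in_image[OF w] by auto
  have wpq: "w q < w p" using et_less_iff[OF wp(2) wp(1)] ep eq abcd by simp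
  have P3: "p \<noteq> q" using pq by simp
  have M: "M = image_mset (\<lambda>k. (es k, et (w k))) (mset_set ({1..x}-{p,q}))"
    using D Gr_split[OF P P3, of w] ep eq by simp
  from D' show ?thesis
  proof
    assume D'1: "D' = M + {#(enat a, d), (enat b, c)#}"
    show ?thesis using P pq wpq Gr_swap[OF P P3, of w] ep eq unfolding D'1 M
      by (intro exI[of _ p] exI[of _ q]) auto
  next
    assume "D' = M + {#(enat a, b), (enat c, d)#}"
    hence False using ph D abcd by simp
    thus ?thesis ..
  qed
  qed
  have B: ?thesis if abc: "b < a" "c < b" "1 \<le> c"
    and D: "Gr w = M + {#(enat a, c), (\<infinity>, b)#}"
    and D': "D' = M + {#(enat a, b), (\<infinity>, c)#} \<or> D' = M + {#(enat b, c), (\<infinity>, a)#}" for M a b c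
  proof -
  have "(\<infinity>, b) \<in># Gr w" "(enat a, c) \<in># Gr w" unfolding D by auto
  then obtain p q where P: "p \<in> {1..x}" "q \<in> {1..x}" and ep: "es p = \<infinity>" "et (w p) = b"
    and eq: "es q = enat a" "et (w q) = c" by (auto dest!: in_Gr)
  have pq: "p < q" using es_less_iff[OF P] ep eq by simp
  have wp: "w p \<in> {1..x}" "w q \<in> {1..x}" using P permutes_in_image[OF w] by auto
  have wpq: "w q < w p" using et_less_iff[OF wp(2) wp(1)] ep eq abc by simp
  have P3: "p \<noteq> q" using pq by simp
  have M: "M = image_mset (\<lambda>k. (es k, et (w k))) (mset_set ({1..x}-{p,q}))"
    using D Gr_split[OF P P3, of w] ep eq by (simp add: add_mset_commute)
  from D' show ?thesis
  proof
    assume D'1: "D' = M + {#(enat a, b), (\<infinity>, c)#}"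
    show ?thesis using P pq wpq Gr_swap[OF P P3, of w] ep eq unfolding D'1 M
      by (intro exI[of _ p] exI[of _ q]) (auto simp: add_mset_commute)
  next
    assume "D' = M + {#(enat b, c), (\<infinity>, a)#}"
    hence False using ph D abc by simp
    thus ?thesis ..
  qed
  qed
  show ?thesis using mv unfolding arc_move_def
    apply (elim disjE exE conjE)
    using A B by blast+
qed

lemma Gr_inj:
  assumes u: "u permutes {1..x}" and w: "w permutes {1..x}" and G: "Gr u = Gr w"
  shows "u = w"
proof
  fix k show "u k = w k"
  proof (cases "k \<in> {1..x}")
    case True
    have "(es k, et (u k)) \<in># Gr u" unfolding Gr_def using True by auto
    hence "(es k, et (u k)) \<in># Gr w" using G by simp
    then obtain k' where k': "k' \<in> {1..x}" "es k = es k'" "et (u k) = et (w k')" by (auto dest!: in_Gr)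
    have "k = k'" using es_less_iff[OF True k'(1)] es_less_iff[OF k'(1) True] k'(2)
      by (cases k k' rule: linorder_cases) auto
    have uw: "u k \<in> {1..x}" "w k \<in> {1..x}"
      using True permutes_in_image[OF u] permutes_in_image[OF w] by auto
    show ?thesis using et_less_iff[OF uw] et_less_iff[OF uw(2) uw(1)] k'(3) \<open>k = k'\<close>
      by (cases "u k" "w k" rule: linorder_cases) auto
  next
    case False thus ?thesis using permutes_not_in[OF u] permutes_not_in[OF w] by simp
  qed
qed

lemma order_back:
  assumes "arc_move\<^sup>*\<^sup>* D E" "E = Gr u" "u permutes {1..x}"
  shows "w permutes {1..x} \<Longrightarrow> D = Gr w \<Longrightarrow> bruhat_le x u w"
  using assms(1)
proof (induction arbitrary: w rule: converse_rtranclp_induct)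
  case base
  have "u = w" using Gr_inj[OF assms(3) base(1)] base(2) assms(2) by simp
  thus ?case by (simp add: bruhat_le_def)
next
  case (step D D1)
  have "Phi E \<le> Phi D1" using step.hyps(2) by (rule moves_Phi)
  moreover have "Phi D1 \<le> Phi D" using step.hyps(1) by (rule move_Phi)
  moreover have "Phi E = Phi D" using assms(2) step.prems(2) Phi_Gr by simp
  ultimately have "Phi D1 = Phi (Gr w)" using step.prems by simp
  from K1[OF step.prems(1) _ this] step.hyps(1) step.prems(2)
  obtain p q where pq: "1 \<le> p" "p < q" "q \<le> x" "w q < w p"
    and D1: "D1 = Gr (w \<circ> Transposition.transpose p q)" by auto
  have perm: "w \<circ> Transposition.transpose p q permutes {1..x}"
    using step.prems(1) pq by (auto intro!: permutes_compose permutes_swap_id)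
  have "bruhat_le x u (w \<circ> Transposition.transpose p q)" using step.IH[OF perm D1] .
  moreover have "bruhat_step x (w \<circ> Transposition.transpose p q) w"
  proof -
    have lt: "(w \<circ> Transposition.transpose p q) p < (w \<circ> Transposition.transpose p q) q"
      using pq by (simp add: Transposition.transpose_def)
    show ?thesis unfolding bruhat_step_iff[OF perm]
      apply (rule exI[of _ p], rule exI[of _ q])
      using pq lt transpose_invol[of w p q] by simp
  qed
  ultimately show ?case unfolding bruhat_le_def by simp
qed

end


context arcsetup begin
lemma order_fwd:
  assumes "bruhat_le x u w" "u permutes {1..x}"
  shows "arc_move\<^sup>*\<^sup>* (Gr w) (Gr u)"
  using assms unfolding bruhat_le_def
proof (induction rule: rtranclp_induct)
  case base thus ?case by simp
next
  case (step y z)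
  have y: "y permutes {1..x}" using bruhat_le_perm[of x u y] step unfolding bruhat_le_def by blast
  from step.hyps(2)[unfolded bruhat_step_iff[OF y]] obtain p q where
    pq: "1 \<le> p" "p < q" "q \<le> x" and z: "z = y \<circ> Transposition.transpose p q" and lt: "y p < y q" by blast
  have zp: "z permutes {1..x}" using bruhat_step_perm[OF step.hyps(2) y] .
  have zlt: "z q < z p" using pq lt by (simp add: z Transposition.transpose_def)
  have e: "z \<circ> Transposition.transpose p q = y" using z transpose_invol[of y p q] by simp
  from K2[OF zp pq zlt] have "arc_move (Gr z) (Gr y)" by (simp only: e)
  thus ?case using step.IH step.prems by (meson converse_rtranclp_into_rtranclp)
qed

lemma order_iff:
  assumes "u permutes {1..x}" "w permutes {1..x}"
  shows "arc_move\<^sup>*\<^sup>* (Gr w) (Gr u) \<longleftrightarrow> bruhat_le x u w"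
  using order_fwd[OF _ assms(1)] order_back[OF _ refl assms(1) assms(2) refl] by blast

lemma es_inj: "inj_on es {1..x}"
  unfolding inj_on_def using es_less_iff
  by (metis linorder_neqE_nat order_less_irrefl)

lemma et_inj: "inj_on et {1..x}"
  unfolding inj_on_def using et_less_iff
  by (metis linorder_neqE_nat order_less_irrefl)

end

lemma card_inj_fiber:
  assumes "inj_on h A"
  shows "card {a\<in>A. h a = y} = (if y \<in> h ` A then 1 else 0)"
proof (cases "y \<in> h ` A")
  case True
  then obtain a0 where a0: "a0 \<in> A" "y = h a0" by auto
  have "{a\<in>A. h a = y} = {a0}" using a0 assms by (auto simp: inj_on_def)
  thus ?thesis using True by simp
next
  case False
  hence e: "{a\<in>A. h a = y} = {}" by auto
  show ?thesis by (simp only: e card.empty if_not_P[OF False])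
qed

lemma size_filter_img:
  "finite A \<Longrightarrow> size (filter_mset P (image_mset h (mset_set A))) = card {a\<in>A. P (h a)}"
proof -
  assume fin: "finite A"
  have "filter_mset P (image_mset h (mset_set A)) = image_mset h (filter_mset (\<lambda>x. P (h x)) (mset_set A))"
    by (rule filter_mset_image_mset)
  also have "filter_mset (\<lambda>x. P (h x)) (mset_set A) = mset_set {a\<in>A. P (h a)}"
    by (rule filter_mset_mset_set[OF fin])
  finally show ?thesis by (simp only: size_image_mset size_mset_set)
qed

lemma filter_two:
  assumes "a \<in># M" "b \<in># M - {#a#}" "P a" "P b"
  shows "2 \<le> size (filter_mset P M)"
proof -
  obtain N where N: "M = add_mset a N" using multi_member_split[OF assms(1)] by blast
  have "M - {#a#} = N" unfolding N by simp
  hence "b \<in># N" using assms(2) by simp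
  then obtain N' where N': "N = add_mset b N'" using multi_member_split by metis
  have "filter_mset P M = add_mset a (add_mset b (filter_mset P N'))"
    unfolding N N' using assms(3,4) by simp
  thus ?thesis by simp
qed

lemma filter_one: "a \<in># M \<Longrightarrow> P a \<Longrightarrow> 1 \<le> size (filter_mset P M)"
proof -
  assume "a \<in># M" "P a"
  hence "filter_mset P M \<noteq> {#}" unfolding filter_mset_eq_mempty_iff by blast
  hence "0 < size (filter_mset P M)" unfolding nonempty_has_size .
  thus ?thesis by linarith
qed

lemma filter_ex: "1 \<le> size (filter_mset P M) \<Longrightarrow> \<exists>a. a \<in># M \<and> P a"
proof -
  assume "1 \<le> size (filter_mset P M)"
  hence "0 < size (filter_mset P M)" by linarith
  hence "filter_mset P M \<noteq> {#}" unfolding nonempty_has_size .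
  thus ?thesis unfolding filter_mset_eq_mempty_iff by blast
qed

lemma nth_image: "(\<lambda>k. xs ! (k - 1)) ` {1..length xs} = set xs"
proof
  show "(\<lambda>k. xs ! (k - 1)) ` {1..length xs} \<subseteq> set xs" by auto
  show "set xs \<subseteq> (\<lambda>k. xs ! (k - 1)) ` {1..length xs}"
  proof
    fix y assume "y \<in> set xs"
    then obtain i where "i < length xs" "y = xs ! i" by (auto simp: in_set_conv_nth)
    thus "y \<in> (\<lambda>k. xs ! (k - 1)) ` {1..length xs}" by (intro image_eqI[of _ _ "Suc i"]) auto
  qed
qed

lemma rowset: "{c. in_skew \<beta> \<gamma> i c} = (if 1 \<le> i then {part (part_conj \<gamma>) i<..part (part_conj \<beta>) i} else {})"
  by (auto simp: in_skew_def)

lemma row_fin: "finite {c. in_skew \<beta> \<gamma> i c}"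
  by (simp add: rowset)

lemma row_card_le:
  assumes "\<forall>i. part (part_conj \<beta>) i - part (part_conj \<gamma>) i \<le> 1"
  shows "card {c. in_skew \<beta> \<gamma> i c} \<le> 1"
  using assms by (simp add: rowset)

lemma rc_le:
  assumes "\<forall>i. part (part_conj \<beta>) i - part (part_conj \<gamma>) i \<le> 1"
  shows "row_count \<beta> \<gamma> T k i \<le> 1"
proof -
  have "row_count \<beta> \<gamma> T k i \<le> card {c. in_skew \<beta> \<gamma> i c}"
    unfolding row_count_def by (intro card_mono row_fin) auto
  thus ?thesis using row_card_le[OF assms, of i] by simp
qed

lemma R_pos: "0 < row_count \<beta> \<gamma> T k i \<Longrightarrow> 1 \<le> i"
  unfolding row_count_def in_skew_def by (cases "1 \<le> i") auto

lemma R_ex: "0 < row_count \<beta> \<gamma> T k i \<longleftrightarrow> (\<exists>c. in_skew \<beta> \<gamma> i c \<and> T i c = k)"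
proof -
  have "finite {c. in_skew \<beta> \<gamma> i c \<and> T i c = k}"
    by (rule finite_subset[OF _ row_fin[of \<beta> \<gamma> i]]) auto
  thus ?thesis unfolding row_count_def by (auto simp: card_gt_0_iff)
qed

lemma fin_R: "finite {i. 0 < row_count \<beta> \<gamma> T k i}"
proof (rule finite_subset[of _ "{1..length (part_conj \<beta>)}"])
  show "{i. 0 < row_count \<beta> \<gamma> T k i} \<subseteq> {1..length (part_conj \<beta>)}"
  proof
    fix i assume "i \<in> {i. 0 < row_count \<beta> \<gamma> T k i}"
    then obtain c where "in_skew \<beta> \<gamma> i c" using R_ex by blast
    thus "i \<in> {1..length (part_conj \<beta>)}"
      unfolding in_skew_def part_def by (auto split: if_splits)
  qed
qed auto

lemma card_R:
  assumes "\<forall>i. part (part_conj \<beta>) i - part (part_conj \<gamma>) i \<le> 1"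
  shows "card {i. 0 < row_count \<beta> \<gamma> T k i} = entry_count \<beta> \<gamma> T k"
proof -
  define P where "P = {(i, c). in_skew \<beta> \<gamma> i c \<and> T i c = k}"
  have inj: "inj_on fst P"
  proof (rule inj_onI)
    fix a b assume ab: "a \<in> P" "b \<in> P" "fst a = fst b"
    obtain i c where a: "a = (i, c)" by (cases a)
    obtain i' c' where b: "b = (i', c')" by (cases b)
    have "c \<in> {c. in_skew \<beta> \<gamma> i c}" "c' \<in> {c. in_skew \<beta> \<gamma> i c}" using ab a b P_def by auto
    hence "c = c'" using row_card_le[OF assms, of i] card_le_Suc0_iff_eq[OF row_fin] by auto
    thus "a = b" using a b ab by simp
  qed
  have img: "fst ` P = {i. 0 < row_count \<beta> \<gamma> T k i}"
    unfolding P_def R_ex by force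
  show ?thesis unfolding entry_count_def P_def[symmetric] img[symmetric] using card_image[OF inj] .
qed

lemma rc_split:
  assumes "\<forall>i c. in_skew \<beta> \<gamma> i c \<longrightarrow> T i c \<in> {1, 2}" "1 \<le> i"
  shows "row_count \<beta> \<gamma> T 1 i + row_count \<beta> \<gamma> T 2 i = part (part_conj \<beta>) i - part (part_conj \<gamma>) i"
proof -
  have eq: "{c. in_skew \<beta> \<gamma> i c} = {c. in_skew \<beta> \<gamma> i c \<and> T i c = 1} \<union> {c. in_skew \<beta> \<gamma> i c \<and> T i c = 2}"
    using assms(1) by auto
  have f1: "finite {c. in_skew \<beta> \<gamma> i c \<and> T i c = 1}" "finite {c. in_skew \<beta> \<gamma> i c \<and> T i c = 2}"
    by (rule finite_subset[OF _ row_fin[of \<beta> \<gamma> i]], auto)+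
  have "card {c. in_skew \<beta> \<gamma> i c} = row_count \<beta> \<gamma> T 1 i + row_count \<beta> \<gamma> T 2 i"
    unfolding row_count_def by (subst eq, rule card_Un_disjoint[OF f1]) auto
  moreover have "card {c. in_skew \<beta> \<gamma> i c} = part (part_conj \<beta>) i - part (part_conj \<gamma>) i"
    using assms(2) by (simp add: rowset)
  ultimately show ?thesis by simp
qed



lemma in_remove_neq: "b \<noteq> a \<Longrightarrow> b \<in># M \<Longrightarrow> b \<in># M - {#a#}"
  by (simp add: in_diff_count)

theorem mainTheorem5:
  fixes \<alpha> \<beta> \<gamma> :: "nat list" and T :: "nat \<Rightarrow> nat \<Rightarrow> nat" and x :: nat
  assumes "is_partition \<alpha>" and "is_partition \<beta>" and "is_partition \<gamma>"
    and "part \<alpha> 1 \<le> 2"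
    and "LR_tableau \<alpha> \<beta> \<gamma> T"
    and "x = entry_count \<beta> \<gamma> T 1"
    and "entry_count \<beta> \<gamma> T 2 = x \<or> entry_count \<beta> \<gamma> T 2 + 1 = x"
    and "\<forall>i. part (part_conj \<beta>) i - part (part_conj \<gamma>) i \<le> 1"
    and "\<forall>i j. row_count \<beta> \<gamma> T 2 j > 0 \<and> row_count \<beta> \<gamma> T 1 i > 0 \<longrightarrow> j > i"
  shows "\<exists>f. bij_betw f (D_Gamma \<alpha> \<beta> \<gamma> T) {w. w permutes {1..x}} \<and>
             (\<forall>\<Delta>\<in>D_Gamma \<alpha> \<beta> \<gamma> T. \<forall>\<Delta>'\<in>D_Gamma \<alpha> \<beta> \<gamma> T.
                arc_le \<Delta> \<Delta>' \<longleftrightarrow> bruhat_le x (f \<Delta>) (f \<Delta>'))"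
proof -
  define m where "m = entry_count \<beta> \<gamma> T 2"
  note LR = assms(5)[unfolded LR_tableau_def]
  have e1: "entry_count \<beta> \<gamma> T 1 = part (part_conj \<alpha>) 1" using LR by blast
  have e2: "entry_count \<beta> \<gamma> T 2 = part (part_conj \<alpha>) 2" using LR by blast
  have a1: "part (part_conj \<alpha>) 1 = x" using e1 assms(6) by simp
  have a2: "part (part_conj \<alpha>) 2 = m" using e2 m_def by simp
  have Tv: "\<forall>i c. in_skew \<beta> \<gamma> i c \<longrightarrow> T i c \<in> {1, 2}" using LR by blast
  have mx: "m = x \<or> m + 1 = x" using assms(7) m_def by auto
  define R1 where "R1 = {i. 0 < row_count \<beta> \<gamma> T 1 i}"
  define R2 where "R2 = {i. 0 < row_count \<beta> \<gamma> T 2 i}"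
  have finR1: "finite R1" and finR2: "finite R2" unfolding R1_def R2_def by (rule fin_R)+
  have cR1: "card R1 = x" unfolding R1_def using card_R[OF assms(8)] assms(6) by simp
  have cR2: "card R2 = m" unfolding R2_def m_def using card_R[OF assms(8)] by simp
  have rc1: "row_count \<beta> \<gamma> T 1 i = (if i \<in> R1 then 1 else 0)" for i
    using rc_le[OF assms(8), of T 1 i] unfolding R1_def by auto
  have rc2: "row_count \<beta> \<gamma> T 2 i = (if i \<in> R2 then 1 else 0)" for i
    using rc_le[OF assms(8), of T 2 i] unfolding R2_def by auto
  have R1pos: "1 \<le> i" if "i \<in> R1" for i using that unfolding R1_def by (blast intro: R_pos)
  have R2pos: "1 \<le> i" if "i \<in> R2" for i using that unfolding R2_def by (blast intro: R_pos)
  have R12: "i < j" if "i \<in> R1" "j \<in> R2" for i j using assms(9) that unfolding R1_def R2_def by blast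
  have bxR: "part (part_conj \<beta>) i - part (part_conj \<gamma>) i = (if i \<in> R1 then 1 else 0) + (if i \<in> R2 then 1 else 0)"
    if "1 \<le> i" for i
    using rc_split[OF Tv that] rc1[of i] rc2[of i] by simp
  define L1 where "L1 = sorted_list_of_set R1"
  define SL where "SL = (if m < x then [\<infinity>::enat] else []) @ map enat (rev (sorted_list_of_set R2))"
  define et where "et = (\<lambda>k. L1 ! (k - 1))"
  define es where "es = (\<lambda>k. SL ! (k - 1))"
  have lenL1: "length L1 = x" using cR1 by (simp add: L1_def)
  have setL1: "set L1 = R1" using finR1 by (simp add: L1_def)
  have sortL1: "sorted_wrt (<) L1" unfolding L1_def by (rule strict_sorted_list_of_set)
  have lenSL: "length SL = x" using mx cR2 by (auto simp: SL_def)
  have setSL: "set SL = (if m < x then {\<infinity>} else {}) \<union> enat ` R2" using finR2 by (simp add: SL_def)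
  have sortSL: "sorted_wrt (>) SL"
    unfolding SL_def using strict_sorted_list_of_set[of R2]
    by (auto simp: sorted_wrt_append sorted_wrt_map sorted_wrt_rev)
  have es_mono: "es q < es p" if "1\<le>p" "p<q" "q\<le>x" for p q
    unfolding es_def using sorted_wrt_nth_less[OF sortSL, of "p-1" "q-1"] that lenSL by simp
  have et_mono: "et p < et q" if "1\<le>p" "p<q" "q\<le>x" for p q
    unfolding et_def using sorted_wrt_nth_less[OF sortL1, of "p-1" "q-1"] that lenL1 by simp
  have imes: "es ` {1..x} = set SL" using nth_image[of SL] lenSL by (simp add: es_def)
  have imet: "et ` {1..x} = R1" using nth_image[of L1] lenL1 setL1 by (simp add: et_def)
  have es_et: "enat (et q) < es p" if "1\<le>p" "p\<le>x" "1\<le>q" "q\<le>x" for p q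
  proof -
    have "es p \<in> es ` {1..x}" using that by simp
    hence sp: "es p \<in> set SL" using imes by simp
    have "et q \<in> et ` {1..x}" using that by simp
    hence tq: "et q \<in> R1" using imet by simp
    have "es p = \<infinity> \<or> (\<exists>j\<in>R2. es p = enat j)" using sp setSL by (auto split: if_splits)
    thus ?thesis
    proof
      assume "es p = \<infinity>" thus ?thesis by simp
    next
      assume "\<exists>j\<in>R2. es p = enat j"
      then obtain j where "j \<in> R2" "es p = enat j" by blast
      thus ?thesis using R12[OF tq] by simp
    qed
  qed
  have et_pos: "1 \<le> et p" if "1\<le>p" "p\<le>x" for p
  proof -
    have "et p \<in> et ` {1..x}" using that by simp
    hence "et p \<in> R1" using imet by simp
    thus ?thesis by (rule R1pos)
  qed
  interpret A: arcsetup x es et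
    apply unfold_locales
    subgoal for p q by (rule es_mono)
    subgoal for p q by (rule et_mono)
    subgoal for p q by (rule es_et)
    subgoal for p by (rule et_pos)
    done

  have inD: "A.Gr w \<in> D_Gamma \<alpha> \<beta> \<gamma> T" if w: "w permutes {1..x}" for w
  proof -
    have sz: "size (filter_mset P (A.Gr w)) = card {k\<in>{1..x}. P (es k, et (w k))}" for P
      unfolding A.Gr_def by (rule size_filter_img) simp
    have einj: "inj_on es {1..x}" by (rule A.es_inj)
    have wim: "w ` {1..x} = {1..x}" using permutes_image[OF w] .
    have ewinj: "inj_on (\<lambda>k. et (w k)) {1..x}"
      using comp_inj_on[OF permutes_inj_on[OF w], of et] A.et_inj wim by (simp add: o_def)
    have ewim: "(\<lambda>k. et (w k)) ` {1..x} = R1"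
    proof -
      have "(\<lambda>k. et (w k)) ` {1..x} = et ` (w ` {1..x})" by (simp add: image_image)
      thus ?thesis using wim imet by simp
    qed
    have cinf: "card {k\<in>{1..x}. es k = \<infinity>} = x - m"
      using card_inj_fiber[OF einj, of \<infinity>] imes setSL mx by auto
    have cfin: "card {k\<in>{1..x}. es k \<noteq> \<infinity>} = m"
    proof -
      have eq: "{k\<in>{1..x}. es k \<noteq> \<infinity>} = {1..x} - {k\<in>{1..x}. es k = \<infinity>}" by auto
      have sub: "{k\<in>{1..x}. es k = \<infinity>} \<subseteq> {1..x}" by auto
      have fin: "finite {k\<in>{1..x}. es k = \<infinity>}" by auto
      have "card ({1..x} - {k\<in>{1..x}. es k = \<infinity>}) = card {1..x} - card {k\<in>{1..x}. es k = \<infinity>}"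
        by (rule card_Diff_subset[OF fin sub])
      hence "card {k\<in>{1..x}. es k \<noteq> \<infinity>} = x - (x - m)"
        unfolding eq cinf by simp
      thus ?thesis using mx by auto
    qed
    have cs: "card {k\<in>{1..x}. es k = enat i} = (if i \<in> R2 then 1 else 0)" for i
      using card_inj_fiber[OF einj, of "enat i"] imes setSL by auto
    have ct: "card {k\<in>{1..x}. et (w k) = i} = (if i \<in> R1 then 1 else 0)" for i
      using card_inj_fiber[OF ewinj, of i] ewim by auto
    have cdeg: "card {k\<in>{1..x}. es k = enat i \<or> et (w k) = i}
       = (if i \<in> R1 then 1 else 0) + (if i \<in> R2 then 1 else 0)" for i
    proof -
      have eq: "{k\<in>{1..x}. es k = enat i \<or> et (w k) = i} = {k\<in>{1..x}. es k = enat i} \<union> {k\<in>{1..x}. et (w k) = i}"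
        by auto
      have disj: "{k\<in>{1..x}. es k = enat i} \<inter> {k\<in>{1..x}. et (w k) = i} = {}"
      proof (rule ccontr)
        assume "\<not> ?thesis"
        then obtain k where k: "k \<in> {1..x}" "es k = enat i" "et (w k) = i" by auto
        have "i \<in> R2" using k imes setSL by (force split: if_splits)
        moreover have "i \<in> R1" using k ewim by force
        ultimately show False using R12 by force
      qed
      show ?thesis unfolding eq using card_Un_disjoint[OF _ _ disj] cs ct by simp
    qed
    show ?thesis unfolding D_Gamma_def arc_diagram_def has_LR_type_def
    proof (intro CollectI conjI allI impI)
      show "\<forall>(s, t)\<in>#A.Gr w. 1 \<le> t \<and> enat t < s"
      proof (intro ballI, clarify)
        fix s t assume "(s, t) \<in># A.Gr w"
        then obtain k where k: "k \<in> {1..x}" "s = es k" "t = et (w k)" by (auto dest!: A.in_Gr)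
        have "w k \<in> {1..x}" using k wim by auto
        thus "1 \<le> t \<and> enat t < s" using k A.et_pos A.es_et by auto
      qed
      show "size (filter_mset (\<lambda>(s, t). s \<noteq> \<infinity>) (A.Gr w)) = part (part_conj \<alpha>) 2"
        using cfin a2 by (simp add: sz del: not_infinity_eq)
      show "size (filter_mset (\<lambda>(s, t). s = \<infinity>) (A.Gr w)) = part (part_conj \<alpha>) 1 - part (part_conj \<alpha>) 2"
        using cinf a1 a2 by (simp add: sz)
      fix i :: nat assume i: "1 \<le> i"
      show "size (filter_mset (\<lambda>(s, t). s = enat i \<or> t = i) (A.Gr w)) = part (part_conj \<beta>) i - part (part_conj \<gamma>) i"
        using cdeg[of i] bxR[OF i] by (simp add: sz)
      show "size (filter_mset (\<lambda>(s, t). s = enat i) (A.Gr w)) = row_count \<beta> \<gamma> T 2 i"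
        using cs[of i] rc2[of i] by (simp add: sz)
    qed
  qed
  have onto: "\<exists>w. w permutes {1..x} \<and> D = A.Gr w" if D: "D \<in> D_Gamma \<alpha> \<beta> \<gamma> T" for D
  proof -
    note DD = D[unfolded D_Gamma_def arc_diagram_def has_LR_type_def, simplified]
    have memb: "1 \<le> t \<and> enat t < s" if "(s, t) \<in># D" for s t
      using D that unfolding D_Gamma_def arc_diagram_def by blast
    have npole: "size (filter_mset (\<lambda>(s, t). s = \<infinity>) D) = x - m"
      using D a1 a2 unfolding D_Gamma_def arc_diagram_def by simp
    have deg: "size (filter_mset (\<lambda>(s, t). s = enat i \<or> t = i) D)
        = (if i \<in> R1 then 1 else 0) + (if i \<in> R2 then 1 else 0)" if "1 \<le> i" for i
      using D that bxR[OF that] unfolding D_Gamma_def arc_diagram_def by simp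
    have lr: "size (filter_mset (\<lambda>(s, t). s = enat i) D) = (if i \<in> R2 then 1 else 0)" if "1 \<le> i" for i
      using D that rc2[of i] unfolding D_Gamma_def has_LR_type_def by simp
    have degle: "size (filter_mset (\<lambda>(s, t). s = enat i \<or> t = i) D) \<le> 1" if "1 \<le> i" for i
      using deg[OF that] R12[of i i] by auto
    have two: "fst a \<noteq> fst b \<and> snd a \<noteq> snd b" if ab: "a \<in># D" "b \<in># D - {#a#}" for a b
    proof -
      obtain s t where a: "a = (s, t)" by (cases a)
      obtain s' t' where b: "b = (s', t')" by (cases b)
      have bD: "b \<in># D" using ab(2) by (rule in_diffD)
      have mt: "1 \<le> t \<and> enat t < s" using memb ab(1) a by simp
      have "s \<noteq> s'"
      proof
        assume ss: "s = s'"
        show False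
        proof (cases s)
          case (enat i)
          have "1 \<le> i" using mt enat by simp
          have "2 \<le> size (filter_mset (\<lambda>(s, t). s = enat i) D)"
            using filter_two[OF ab, of "\<lambda>(s, t). s = enat i"] a b ss enat by simp
          thus False using lr[OF \<open>1 \<le> i\<close>] by (simp split: if_splits)
        next
          case infinity
          have "2 \<le> size (filter_mset (\<lambda>(s, t). s = \<infinity>) D)"
            using filter_two[OF ab, of "\<lambda>(s, t). s = \<infinity>"] a b ss infinity by simp
          thus False using npole mx by auto
        qed
      qed
      moreover have "t \<noteq> t'"
      proof
        assume tt: "t = t'"
        have "2 \<le> size (filter_mset (\<lambda>(s, u). s = enat t \<or> u = t) D)"
          using filter_two[OF ab, of "\<lambda>(s, u). s = enat t \<or> u = t"] a b tt by simp
        thus False using degle[of t] mt by simp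
      qed
      ultimately show ?thesis using a b by simp
    qed
    have uniq: "a = b" if "a \<in># D" "b \<in># D" "fst a = fst b \<or> snd a = snd b" for a b
    proof (rule ccontr)
      assume "a \<noteq> b"
      hence "b \<in># D - {#a#}" using that(2) by (simp add: in_remove_neq)
      thus False using two[OF that(1)] that(3) by blast
    qed
    have cnt: "count D a \<le> 1" for a
    proof (rule ccontr)
      assume "\<not> count D a \<le> 1"
      hence "a \<in># D - {#a#}" by (simp add: in_diff_count)
      moreover have "a \<in># D" using \<open>\<not> count D a \<le> 1\<close> by (intro count_inI) simp
      ultimately show False using two by blast
    qed
    have F1: "s \<in> set SL" if st: "(s, t) \<in># D" for s t
    proof (cases s)
      case infinity
      have "1 \<le> size (filter_mset (\<lambda>(s, t). s = \<infinity>) D)"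
        using filter_one[OF st, of "\<lambda>(s, t). s = \<infinity>"] infinity by simp
      hence "m < x" using npole by simp
      thus ?thesis using setSL infinity by simp
    next
      case (enat i)
      have "1 \<le> i" using memb[OF st] enat by simp
      have "1 \<le> size (filter_mset (\<lambda>(s, t). s = enat i) D)"
        using filter_one[OF st, of "\<lambda>(s, t). s = enat i"] enat by simp
      hence "i \<in> R2" using lr[OF \<open>1 \<le> i\<close>] by (simp split: if_splits)
      thus ?thesis using setSL enat by simp
    qed
    have F2: "t \<in> R1" if st: "(s, t) \<in># D" for s t
    proof (rule ccontr)
      assume nR1: "t \<notin> R1"
      have t1: "1 \<le> t" using memb[OF st] by simp
      have "1 \<le> size (filter_mset (\<lambda>(s, u). s = enat t \<or> u = t) D)"
        using filter_one[OF st, of "\<lambda>(s, u). s = enat t \<or> u = t"] by simp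
      hence "t \<in> R2" using deg[OF t1] nR1 by (simp split: if_splits)
      hence "1 \<le> size (filter_mset (\<lambda>(s, u). s = enat t) D)" using lr[OF t1] by simp
      then obtain b where b: "b \<in># D" "(\<lambda>(s, u). s = enat t) b" using filter_ex by blast
      have "b \<noteq> (s, t)" using b memb[OF st] by auto
      hence "b \<in># D - {#(s, t)#}" using b(1) by (simp add: in_remove_neq)
      from filter_two[OF st this, of "\<lambda>(s, u). s = enat t \<or> u = t"]
      have "2 \<le> size (filter_mset (\<lambda>(s, u). s = enat t \<or> u = t) D)" using b by auto
      thus False using degle[OF t1] by simp
    qed
    have F5: "\<exists>t. (s, t) \<in># D" if s: "s \<in> set SL" for s
    proof (cases s)
      case infinity
      hence "m < x" using s setSL by (auto split: if_splits)
      hence "1 \<le> size (filter_mset (\<lambda>(s, t). s = \<infinity>) D)" using npole by simp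
      then obtain b where "b \<in># D" "(\<lambda>(s, t). s = \<infinity>) b" using filter_ex by blast
      thus ?thesis using infinity by (cases b) auto
    next
      case (enat i)
      hence "i \<in> R2" using s setSL by (auto split: if_splits)
      hence "1 \<le> size (filter_mset (\<lambda>(s, t). s = enat i) D)" using lr[OF R2pos] by simp
      then obtain b where "b \<in># D" "(\<lambda>(s, t). s = enat i) b" using filter_ex by blast
      thus ?thesis using enat by (cases b) auto
    qed
    have exj: "\<exists>j. j \<in> {1..x} \<and> (es k, et j) \<in># D" if k: "k \<in> {1..x}" for k
    proof -
      have "es k \<in> set SL" using k imes by blast
      then obtain t where t: "(es k, t) \<in># D" using F5 by blast
      have "t \<in> et ` {1..x}" using F2[OF t] imet by simp
      then obtain j where "j \<in> {1..x}" "t = et j" by blast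
      thus ?thesis using t by blast
    qed
    define w where "w = (\<lambda>k. if k \<in> {1..x} then (SOME j. j \<in> {1..x} \<and> (es k, et j) \<in># D) else k)"
    have wk: "w k \<in> {1..x} \<and> (es k, et (w k)) \<in># D" if k: "k \<in> {1..x}" for k
      using someI_ex[OF exj[OF k]] k unfolding w_def by simp
    have winj: "inj_on w {1..x}"
    proof (rule inj_onI)
      fix k k' assume kk: "k \<in> {1..x}" "k' \<in> {1..x}" "w k = w k'"
      have "(es k, et (w k)) = (es k', et (w k'))"
        using uniq[OF conjunct2[OF wk[OF kk(1)]] conjunct2[OF wk[OF kk(2)]]] kk(3) by simp
      hence "es k = es k'" by simp
      thus "k = k'" using inj_onD[OF A.es_inj _ kk(1) kk(2)] by blast
    qed
    have wsub: "w ` {1..x} \<subseteq> {1..x}"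
    proof
      fix y assume "y \<in> w ` {1..x}"
      then obtain k where "k \<in> {1..x}" "y = w k" by blast
      thus "y \<in> {1..x}" using wk[of k] by blast
    qed
    have wim: "w ` {1..x} = {1..x}" by (rule endo_inj_surj[OF finite_atLeastAtMost wsub winj])
    have wperm: "w permutes {1..x}"
    proof (rule bij_imp_permutes)
      show "bij_betw w {1..x} {1..x}" unfolding bij_betw_def using winj wim by blast
      show "w k = k" if "k \<notin> {1..x}" for k unfolding w_def by (simp only: if_not_P[OF that])
    qed
    let ?h = "\<lambda>k. (es k, et (w k))"
    have hinj: "inj_on ?h {1..x}"
    proof (rule inj_onI)
      fix k k' assume kk: "k \<in> {1..x}" "k' \<in> {1..x}" "?h k = ?h k'"
      hence "es k = es k'" by simp
      thus "k = k'" using inj_onD[OF A.es_inj _ kk(1) kk(2)] by blast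
    qed
    have memD: "a \<in># D \<longleftrightarrow> a \<in> ?h ` {1..x}" for a
    proof
      assume aD: "a \<in># D"
      obtain s t where a: "a = (s, t)" by (cases a)
      have "s \<in> es ` {1..x}" using F1[of s t] aD a imes by simp
      then obtain k where k: "k \<in> {1..x}" "s = es k" by blast
      have "a = ?h k" using uniq[OF aD conjunct2[OF wk[OF k(1)]]] a k by simp
      thus "a \<in> ?h ` {1..x}" using k by blast
    next
      assume "a \<in> ?h ` {1..x}"
      thus "a \<in># D" using wk by auto
    qed
    have "D = A.Gr w"
    proof (rule multiset_eqI)
      fix a
      have "count (A.Gr w) a = card {k\<in>{1..x}. ?h k = a}"
        unfolding A.Gr_def by (rule count_image_mset_eq_card_vimage) simp
      also have "\<dots> = (if a \<in> ?h ` {1..x} then 1 else 0)" by (rule card_inj_fiber[OF hinj])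
      also have "\<dots> = count D a"
      proof (cases "a \<in># D")
        case True
        hence "0 < count D a" by simp
        with cnt[of a] have "count D a = 1" by linarith
        thus ?thesis using True memD[of a] by simp
      next
        case False thus ?thesis using memD[of a] by (simp add: not_in_iff)
      qed
      finally show "count D a = count (A.Gr w) a" by simp
    qed
    thus ?thesis using wperm by blast
  qed
  have bij: "bij_betw A.Gr {w. w permutes {1..x}} (D_Gamma \<alpha> \<beta> \<gamma> T)"
    unfolding bij_betw_def
  proof
    show "inj_on A.Gr {w. w permutes {1..x}}"
    proof (rule inj_onI)
      fix u w assume "u \<in> {w. w permutes {1..x}}" "w \<in> {w. w permutes {1..x}}" "A.Gr u = A.Gr w"
      thus "u = w" using A.Gr_inj[of u w] by blast
    qed
    show "A.Gr ` {w. w permutes {1..x}} = D_Gamma \<alpha> \<beta> \<gamma> T" using inD onto by blast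
  qed
  define f where "f = inv_into {w. w permutes {1..x}} A.Gr"
  show ?thesis
  proof (intro exI[of _ f] conjI)
    show "bij_betw f (D_Gamma \<alpha> \<beta> \<gamma> T) {w. w permutes {1..x}}" unfolding f_def by (rule bij_betw_inv_into[OF bij])
    show "\<forall>\<Delta>\<in>D_Gamma \<alpha> \<beta> \<gamma> T. \<forall>\<Delta>'\<in>D_Gamma \<alpha> \<beta> \<gamma> T. arc_le \<Delta> \<Delta>' \<longleftrightarrow> bruhat_le x (f \<Delta>) (f \<Delta>')"
    proof (intro ballI)
      fix \<Delta> \<Delta>' assume d: "\<Delta> \<in> D_Gamma \<alpha> \<beta> \<gamma> T" "\<Delta>' \<in> D_Gamma \<alpha> \<beta> \<gamma> T"
      have im: "A.Gr ` {w. w permutes {1..x}} = D_Gamma \<alpha> \<beta> \<gamma> T" using bij by (simp add: bij_betw_def)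
      have dd: "\<Delta> \<in> A.Gr ` {w. w permutes {1..x}}" "\<Delta>' \<in> A.Gr ` {w. w permutes {1..x}}"
        using d im by auto
      have p: "f \<Delta> permutes {1..x}" "f \<Delta>' permutes {1..x}"
        using inv_into_into[OF dd(1)] inv_into_into[OF dd(2)] unfolding f_def by auto
      have g: "A.Gr (f \<Delta>) = \<Delta>" "A.Gr (f \<Delta>') = \<Delta>'"
        using f_inv_into_f[OF dd(1)] f_inv_into_f[OF dd(2)] unfolding f_def by auto
      show "arc_le \<Delta> \<Delta>' \<longleftrightarrow> bruhat_le x (f \<Delta>) (f \<Delta>')"
        using A.order_iff[OF p] g unfolding arc_le_def by simp
    qed
  qed
qed


end
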